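(* For every integer $n\ge0$, $U_n(x,y,a;q)=\mathbb{F}(aD_{xy})\{P_n(x,y)\}$.
   Context: $q$ is a fixed complex number with $0<|q|<1$; $(a;q)_n=\prod_{i=0}^{n-1}(1-aq^i)$; ${n\brack k}=\frac{(q;q)_n}{(q;q)_k(q;q)_{n-k}}$. $P_n(x,y)=\prod_{i=0}^{n-1}(x-q^iy)$ and $U_n(x,y,a;q)=\sum_{k=0}^n{n\brack k}(-1)^kq^{\binom k2}a^kP_{n-k}(x,y)$. The homogeneous $q$-difference operator acting on functions of $(x,y)$ is $D_{xy}\{f(x,y)\}=\frac{f(x,q^{-1}y)-f(qx,y)}{x-q^{-1}y}$, and the homogeneous $q$-shift operator is $\mathbb{F}(aD_{xy})=\sum_{n=0}^\infty\frac{(-1)^nq^{\binom n2}(aD_{xy})^n}{(q;q)_n}$ (with $D_{xy}^0$ the identity). *)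

theory Defs
  imports "HOL-Analysis.Analysis"
begin

definition qpoch :: "complex \<Rightarrow> complex \<Rightarrow> nat \<Rightarrow> complex" where
  "qpoch a q n = (\<Prod>i<n. (1 - a * q ^ i))"

definition qbinom :: "complex \<Rightarrow> nat \<Rightarrow> nat \<Rightarrow> complex" where
  "qbinom q n k = qpoch q q n / (qpoch q q k * qpoch q q (n - k))"

definition Pn :: "complex \<Rightarrow> nat \<Rightarrow> complex \<Rightarrow> complex \<Rightarrow> complex" where
  "Pn q n x y = (\<Prod>i<n. (x - q ^ i * y))"

definition Upoly :: "nat \<Rightarrow> complex \<Rightarrow> complex \<Rightarrow> complex \<Rightarrow> complex \<Rightarrow> complex" where
  "Upoly n x y a q = (\<Sum>k\<le>n. qbinom q n k * (-1) ^ k * q ^ (k choose 2) * a ^ k * Pn q (n - k) x y)"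

text \<open>Homogeneous q-difference operator D_xy; the difference quotient is
  extended to the line x = y/q by its limit (removable singularity), as is
  implicit in the paper where D_xy acts on polynomials.\<close>
definition Dxy :: "complex \<Rightarrow> (complex \<Rightarrow> complex \<Rightarrow> complex) \<Rightarrow> complex \<Rightarrow> complex \<Rightarrow> complex" where
  "Dxy q f = (\<lambda>x y. Lim (at x) (\<lambda>t. (f t (y / q) - f (q * t) y) / (t - y / q)))"

definition qshift :: "complex \<Rightarrow> complex \<Rightarrow> (complex \<Rightarrow> complex \<Rightarrow> complex) \<Rightarrow> complex \<Rightarrow> complex \<Rightarrow> complex" where
  "qshift q a f = (\<lambda>x y. (\<Sum>m. (-1) ^ m * q ^ (m choose 2) * a ^ m * ((Dxy q ^^ m) f) x y / qpoch q q m))"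

end

theory Submission
  imports Defs
begin

lemma Pn_shift:
  assumes "q \<noteq> 0"
  shows "Pn q (Suc k) t (y / q) = (t - y / q) * Pn q k t y"
  unfolding Pn_def using assms
  by (simp add: prod.lessThan_Suc_shift del: prod.lessThan_Suc)

lemma Pn_scale:
  assumes "q \<noteq> 0"
  shows "Pn q n (q * t) y = q ^ n * Pn q n t (y / q)"
proof -
  have "Pn q n (q * t) y = (\<Prod>i<n. q * (t - q ^ i * (y / q)))"
    unfolding Pn_def by (rule prod.cong) (use assms in \<open>auto simp: field_simps\<close>)
  also have "\<dots> = q ^ n * Pn q n t (y / q)"
    unfolding Pn_def by (simp add: prod.distrib)
  finally show ?thesis .
qed

lemma Dxy_Pn:
  assumes "q \<noteq> 0"
  shows "Dxy q (\<lambda>x y. c * Pn q n x y) = (\<lambda>x y. c * (1 - q ^ n) * Pn q (n - 1) x y)"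
proof (intro ext)
  fix x y :: complex
  define h where "h = (\<lambda>t. c * (1 - q ^ n) * Pn q (n - 1) t y)"
  have eq: "(c * Pn q n t (y / q) - c * Pn q n (q * t) y) / (t - y / q) = h t"
    if "t \<noteq> y / q" for t
  proof (cases n)
    case 0
    then show ?thesis by (simp add: h_def Pn_def)
  next
    case (Suc k)
    have "c * Pn q n t (y / q) - c * Pn q n (q * t) y = c * (1 - q ^ n) * (t - y / q) * Pn q k t y"
      using assms by (simp add: Suc Pn_scale Pn_shift algebra_simps)
    then show ?thesis using that by (simp add: h_def Suc)
  qed
  have ev: "eventually (\<lambda>t. t \<noteq> y / q) (at x)"
    by (rule eventually_neq_at_within)
  have cont: "(h \<longlongrightarrow> h x) (at x)"
    unfolding h_def Pn_def by (intro tendsto_intros)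
  have "((\<lambda>t. (c * Pn q n t (y / q) - c * Pn q n (q * t) y) / (t - y / q)) \<longlongrightarrow> h x) (at x)"
    by (rule Lim_transform_eventually[OF cont]) (use ev eq in \<open>auto elim: eventually_mono\<close>)
  then show "Dxy q (\<lambda>x y. c * Pn q n x y) x y = c * (1 - q ^ n) * Pn q (n - 1) x y"
    unfolding Dxy_def by (simp add: tendsto_Lim h_def)
qed

fun coef :: "complex \<Rightarrow> nat \<Rightarrow> nat \<Rightarrow> complex" where
  "coef q n 0 = 1"
| "coef q n (Suc m) = (1 - q ^ n) * coef q (n - 1) m"

lemma Dxy_pow:
  assumes "q \<noteq> 0"
  shows "(Dxy q ^^ m) (\<lambda>x y. c * Pn q n x y) = (\<lambda>x y. c * coef q n m * Pn q (n - m) x y)"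
  using assms
proof (induction m arbitrary: c n)
  case 0 then show ?case by simp
next
  case (Suc m)
  show ?case
    by (simp only: funpow_Suc_right o_apply Dxy_Pn[OF Suc.prems] Suc.IH[OF Suc.prems])
       (simp add: algebra_simps)
qed

lemma coef_zero: "n < m \<Longrightarrow> coef q n m = 0"
proof (induction m arbitrary: n)
  case 0 then show ?case by simp
next
  case (Suc m)
  show ?case
  proof (cases n)
    case 0 then show ?thesis by simp
  next
    case (Suc k) then show ?thesis using Suc.IH[of k] Suc.prems by simp
  qed
qed

lemma coef_qpoch: "m \<le> n \<Longrightarrow> coef q n m * qpoch q q (n - m) = qpoch q q n"
proof (induction m arbitrary: n)
  case 0 then show ?case by simp
next
  case (Suc m)
  then obtain k where k: "n = Suc k" by (cases n) auto
  have "qpoch q q (Suc k) = (1 - q * q ^ k) * qpoch q q k"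
    unfolding qpoch_def by (simp add: mult.commute)
  then show ?case using Suc.IH[of k] Suc.prems k by simp
qed

lemma qpoch_nz:
  assumes "norm q < 1"
  shows "qpoch q q n \<noteq> 0"
proof -
  have "1 - q * q ^ i \<noteq> 0" for i
  proof
    assume h: "1 - q * q ^ i = 0"
    have "norm (q ^ i) \<le> 1"
      using assms by (simp add: norm_power power_le_one)
    then have "norm q * norm (q ^ i) < 1"
      using assms by (metis mult_le_one less_eq_real_def norm_ge_zero mult_less_cancel_right1 order_le_less_trans mult.commute)
    moreover have "norm (q * q ^ i) = 1" using h by (metis eq_iff_diff_eq_0 norm_one)
    ultimately show False by (simp add: norm_mult)
  qed
  then show ?thesis unfolding qpoch_def by (simp add: prod_zero_iff)
qed

theorem mainTheorem4:
  fixes q a x y :: complex and n :: nat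
  assumes "0 < norm q" and "norm q < 1"
  shows "Upoly n x y a q = qshift q a (Pn q n) x y"
proof -
  have q0: "q \<noteq> 0" using assms by auto
  have P1: "Pn q n = (\<lambda>x y. 1 * Pn q n x y)" by simp
  define T where "T m = (-1) ^ m * q ^ (m choose 2) * a ^ m * ((Dxy q ^^ m) (Pn q n)) x y / qpoch q q m" for m
  have T: "T m = (-1) ^ m * q ^ (m choose 2) * a ^ m * (coef q n m * Pn q (n - m) x y) / qpoch q q m" for m
    unfolding T_def by (subst P1, subst Dxy_pow[OF q0]) simp
  have "(\<Sum>m. T m) = (\<Sum>m\<le>n. T m)"
    by (rule suminf_finite) (auto simp: T coef_zero)
  also have "\<dots> = Upoly n x y a q"
    unfolding Upoly_def
  proof (rule sum.cong[OF refl])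
    fix m assume "m \<in> {..n}"
    then have mn: "m \<le> n" by simp
    have c: "coef q n m = qpoch q q n / qpoch q q (n - m)"
      using coef_qpoch[OF mn, of q] qpoch_nz[OF assms(2)] by (simp add: field_simps)
    show "T m = qbinom q n m * (-1) ^ m * q ^ (m choose 2) * a ^ m * Pn q (n - m) x y"
      unfolding T c qbinom_def by (simp add: field_simps)
  qed
  finally show ?thesis unfolding qshift_def T_def by simp
qed

end
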